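(* With the notation of the context, $\lim_{t\uparrow\tau}T_t=+\infty$ $\mathbb Q$-almost surely.
   Context: Fix $\gamma>0$, $D>0$. On a probability space $(\Omega_+,\mathcal F_+,\mathbb Q)$ let $x_-,y_-$ be real random variables with $x_->0$ a.s., and let $B$ be a standard Brownian motion independent of $(x_-,y_-)$. Define $\hat y(t)=e^{-\gamma t}y_-+\sqrt{2D}\int_0^t e^{-\gamma(t-s)}\,dB_s$, $t\ge0$, the random time $\tau=\inf\{s\ge0:\int_0^s\hat y(r)\,dr=x_-^{-3}/3\}$ (which is finite $\mathbb Q$-a.s.), the process $\hat x(t)=\big[x_-^{-3}-3\int_0^t\hat y(s)\,ds\big]^{-1/3}$ for $t<\tau$, and $T_t=\int_0^t\hat x(s)^4\,ds$ for $t<\tau$, $T_t=+\infty$ for $t\ge\tau$. *)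

theory Defs
  imports "HOL-Probability.Probability"
begin

definition std_brownian_motion :: "'a measure \<Rightarrow> (real \<Rightarrow> 'a \<Rightarrow> real) \<Rightarrow> bool" where
  "std_brownian_motion M B \<longleftrightarrow>
     prob_space M \<and>
     (\<forall>t\<ge>0. B t \<in> borel_measurable M) \<and>
     (AE \<omega> in M. B 0 \<omega> = 0 \<and> continuous_on {0..} (\<lambda>t. B t \<omega>)) \<and>
     (\<forall>(ts :: nat \<Rightarrow> real) n. 0 \<le> ts 0 \<and> strict_mono ts \<longrightarrow>
        prob_space.indep_vars M (\<lambda>_. borel) (\<lambda>i \<omega>. B (ts (Suc i)) \<omega> - B (ts i) \<omega>) {..<n}) \<and>
     (\<forall>s t. 0 \<le> s \<and> s < t \<longrightarrow>
        distributed M lborel (\<lambda>\<omega>. B t \<omega> - B s \<omega>) (\<lambda>z. ennreal (normal_density 0 (sqrt (t - s)) z)))"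

definition process_events :: "'a measure \<Rightarrow> (real \<Rightarrow> 'a \<Rightarrow> real) \<Rightarrow> 'a set set" where
  "process_events M B = sigma_sets (space M) (\<Union>t\<in>{0..}. {B t -` S \<inter> space M | S. S \<in> sets borel})"

definition pair_events :: "'a measure \<Rightarrow> ('a \<Rightarrow> real) \<Rightarrow> ('a \<Rightarrow> real) \<Rightarrow> 'a set set" where
  "pair_events M x y = {(\<lambda>\<omega>. (x \<omega>, y \<omega>)) -` S \<inter> space M | S. S \<in> sets (borel :: (real \<times> real) measure)}"

text \<open>Ornstein-Uhlenbeck process yhat(t) = e^{-g t} y + sqrt(2D) int_0^t e^{-g(t-s)} dB_s.
  The Wiener integral of the deterministic C^1 integrand is written pathwise via
  integration by parts:  int_0^t e^{-g(t-s)} dB_s = B_t - B_0 - g int_0^t e^{-g(t-s)} B_s ds.\<close>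
definition yhat :: "real \<Rightarrow> real \<Rightarrow> ('a \<Rightarrow> real) \<Rightarrow> (real \<Rightarrow> 'a \<Rightarrow> real) \<Rightarrow> real \<Rightarrow> 'a \<Rightarrow> real" where
  "yhat \<gamma> D y B t \<omega> = exp (- \<gamma> * t) * y \<omega> +
     sqrt (2 * D) * (B t \<omega> - B 0 \<omega> - \<gamma> * integral {0..t} (\<lambda>s. exp (- \<gamma> * (t - s)) * B s \<omega>))"

definition tau :: "real \<Rightarrow> real \<Rightarrow> ('a \<Rightarrow> real) \<Rightarrow> ('a \<Rightarrow> real) \<Rightarrow> (real \<Rightarrow> 'a \<Rightarrow> real) \<Rightarrow> 'a \<Rightarrow> real" where
  "tau \<gamma> D x y B \<omega> = Inf {s. 0 \<le> s \<and> integral {0..s} (\<lambda>r. yhat \<gamma> D y B r \<omega>) = x \<omega> powr (-3) / 3}"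

definition xhat :: "real \<Rightarrow> real \<Rightarrow> ('a \<Rightarrow> real) \<Rightarrow> ('a \<Rightarrow> real) \<Rightarrow> (real \<Rightarrow> 'a \<Rightarrow> real) \<Rightarrow> real \<Rightarrow> 'a \<Rightarrow> real" where
  "xhat \<gamma> D x y B t \<omega> = (x \<omega> powr (-3) - 3 * integral {0..t} (\<lambda>s. yhat \<gamma> D y B s \<omega>)) powr (- 1 / 3)"

definition Tclock :: "real \<Rightarrow> real \<Rightarrow> ('a \<Rightarrow> real) \<Rightarrow> ('a \<Rightarrow> real) \<Rightarrow> (real \<Rightarrow> 'a \<Rightarrow> real) \<Rightarrow> real \<Rightarrow> 'a \<Rightarrow> ereal" where
  "Tclock \<gamma> D x y B t \<omega> =
     (if t < tau \<gamma> D x y B \<omega> then ereal (integral {0..t} (\<lambda>s. xhat \<gamma> D x y B s \<omega> ^ 4)) else \<infinity>)"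

end

theory Submission
  imports Defs
begin

lemma J_split:
  fixes b :: "real \<Rightarrow> real"
  shows "integral {0..r} (\<lambda>s. exp (- \<gamma> * (r - s)) * b s) = exp (- \<gamma> * r) * integral {0..r} (\<lambda>s. exp (\<gamma> * s) * b s)"
proof -
  have "(\<lambda>s. exp (- \<gamma> * (r - s)) * b s) = (\<lambda>s. exp (- \<gamma> * r) * (exp (\<gamma> * s) * b s))"
    by (auto simp: fun_eq_iff mult_exp_exp algebra_simps)
  then show ?thesis by simp
qed

lemma J_deriv:
  fixes b :: "real \<Rightarrow> real"
  assumes "continuous_on {0..T} b" "r \<in> {0..T}"
  shows "((\<lambda>r. integral {0..r} (\<lambda>s. exp (- \<gamma> * (r - s)) * b s)) has_real_derivative
     (b r - \<gamma> * integral {0..r} (\<lambda>s. exp (- \<gamma> * (r - s)) * b s))) (at r within {0..T})"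
proof -
  have c: "continuous_on {0..T} (\<lambda>s. exp (\<gamma> * s) * b s)" by (intro continuous_intros assms)
  have H: "((\<lambda>u. integral {0..u} (\<lambda>s. exp (\<gamma> * s) * b s)) has_real_derivative (exp (\<gamma> * r) * b r)) (at r within {0..T})"
    using integral_has_vector_derivative[OF c assms(2)] by (simp add: has_real_derivative_iff_has_vector_derivative)
  have E: "((\<lambda>u. exp (- \<gamma> * u)) has_real_derivative (- \<gamma> * exp (- \<gamma> * r))) (at r within {0..T})"
    by (auto intro!: derivative_eq_intros)
  have e: "exp (\<gamma> * r) * b r * exp (- \<gamma> * r) = b r"
    by (simp add: mult_exp_exp mult.commute mult.left_commute)
  show ?thesis unfolding J_split
    by (rule DERIV_cong[OF DERIV_mult[OF E H]]) (use e in \<open>simp add: algebra_simps\<close>)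
qed

lemma F_has_integral:
  fixes b :: "real \<Rightarrow> real"
  assumes g: "\<gamma> > 0" and cont: "continuous_on {0..t} b" and t: "0 \<le> t"
  shows "((\<lambda>r. exp (- \<gamma> * r) * y0 + sqrt (2 * D) * (b r - b 0 - \<gamma> * integral {0..r} (\<lambda>s. exp (- \<gamma> * (r - s)) * b s)))
     has_integral (y0 * (1 - exp (- \<gamma> * t)) / \<gamma> + sqrt (2 * D) * (integral {0..t} (\<lambda>s. exp (- \<gamma> * (t - s)) * b s) - b 0 * t))) {0..t}"
proof -
  define J where "J r = integral {0..r} (\<lambda>s. exp (- \<gamma> * (r - s)) * b s)" for r
  define F where "F r = y0 * (1 - exp (- \<gamma> * r)) / \<gamma> + sqrt (2 * D) * (J r - b 0 * r)" for r
  have "((\<lambda>r. exp (- \<gamma> * r) * y0 + sqrt (2 * D) * (b r - b 0 - \<gamma> * J r)) has_integral (F t - F 0)) {0..t}"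
  proof (rule fundamental_theorem_of_calculus[OF t])
    fix r assume r: "r \<in> {0..t}"
    have dJ: "(J has_real_derivative (b r - \<gamma> * J r)) (at r within {0..t})"
      unfolding J_def by (rule J_deriv[OF cont r])
    have "(F has_real_derivative (y0 * (\<gamma> * exp (- \<gamma> * r)) / \<gamma> + sqrt (2 * D) * ((b r - \<gamma> * J r) - b 0))) (at r within {0..t})"
      unfolding F_def by (auto intro!: derivative_eq_intros dJ)
    then show "(F has_vector_derivative (exp (- \<gamma> * r) * y0 + sqrt (2 * D) * (b r - b 0 - \<gamma> * J r))) (at r within {0..t})"
      using g by (simp add: has_real_derivative_iff_has_vector_derivative algebra_simps)
  qed
  moreover have "F 0 = 0" by (simp add: F_def J_def)
  ultimately show ?thesis by (simp add: F_def J_def)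
qed

lemma J_cont:
  fixes b :: "real \<Rightarrow> real"
  assumes "continuous_on {0..T} b"
  shows "continuous_on {0..T} (\<lambda>r. integral {0..r} (\<lambda>s. exp (- \<gamma> * (r - s)) * b s))"
  by (rule DERIV_continuous_on[OF J_deriv[OF assms]])

lemma det_main:
  fixes b :: "real \<Rightarrow> real" and yh :: "real \<Rightarrow> real"
  assumes g: "\<gamma> > 0" and cont: "continuous_on {0..} b" and b0: "b 0 = 0" and c: "c > 0"
    and yh: "yh = (\<lambda>r. exp (- \<gamma> * r) * y0 + sqrt (2 * D) * (b r - b 0 - \<gamma> * integral {0..r} (\<lambda>s. exp (- \<gamma> * (r - s)) * b s)))"
    and ex: "\<exists>s\<ge>0. c \<le> integral {0..s} yh"
  shows "((\<lambda>t. if t < Inf {s. 0 \<le> s \<and> integral {0..s} yh = c}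
             then ereal (integral {0..t} (\<lambda>s. ((3 * c - 3 * integral {0..s} yh) powr (- 1 / 3)) ^ 4))
             else \<infinity>) \<longlongrightarrow> \<infinity>) (at_left (Inf {s. 0 \<le> s \<and> integral {0..s} yh = c}))"
proof -
  define J where "J = (\<lambda>r. integral {0..r} (\<lambda>s. exp (- \<gamma> * (r - s)) * b s))"
  define F where "F r = y0 * (1 - exp (- \<gamma> * r)) / \<gamma> + sqrt (2 * D) * J r" for r
  have contT: "continuous_on {0..T} b" for T using cont by (rule continuous_on_subset) auto
  have IF: "integral {0..t} yh = F t" if "0 \<le> t" for t
    using F_has_integral[OF g contT[of t] that, of y0 D] b0 unfolding yh F_def J_def
    by (simp add: integral_unique)
  have Jc: "continuous_on {0..T} J" for T unfolding J_def by (rule J_cont[OF contT])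
  have Fc: "continuous_on {0..T} F" for T unfolding F_def using g by (intro continuous_intros Jc) auto
  have yhc: "continuous_on {0..T} yh" for T unfolding yh using Jc[of T] unfolding J_def
    by (intro continuous_intros contT) auto
  obtain s0 where s0: "0 \<le> s0" "c \<le> F s0" using ex IF by auto
  have F0: "F 0 = 0" by (simp add: F_def J_def)
  define Z where "Z = {s. 0 \<le> s \<and> integral {0..s} yh = c}"
  have Zeq: "Z = {s. 0 \<le> s \<and> F s = c}" using IF by (auto simp: Z_def)
  define Z' where "Z' = {0..s0} \<inter> F -` {c}"
  have "closed Z'" unfolding Z'_def by (rule continuous_closed_preimage[OF Fc]) auto
  moreover have "Z' \<noteq> {}"
    using IVT'[of F 0 c s0] F0 c s0 Fc[of s0] by (auto simp: Z'_def)
  moreover have "bdd_below Z'" by (rule bdd_belowI[of _ 0]) (auto simp: Z'_def)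
  ultimately have tZ': "Inf Z' \<in> Z'" by (rule closed_contains_Inf[rotated 2])
  define \<tau> where "\<tau> = Inf Z'"
  have tZ: "\<tau> \<in> Z" using tZ' by (auto simp: Zeq Z'_def \<tau>_def)
  have tmin: "\<tau> \<le> z" if "z \<in> Z" for z
  proof (cases "z \<le> s0")
    case True
    then have "z \<in> Z'" using that by (auto simp: Zeq Z'_def)
    then show ?thesis unfolding \<tau>_def by (rule cInf_lower) fact
  next
    case False
    then show ?thesis using tZ' by (auto simp: \<tau>_def Z'_def)
  qed
  have InfZ: "Inf Z = \<tau>" by (rule cInf_eq_minimum[OF tZ tmin])
  have Ft: "F \<tau> = c" "0 \<le> \<tau>" using tZ by (auto simp: Zeq)
  have tpos: "\<tau> > 0" using Ft F0 c by (cases "\<tau> = 0") auto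
  have below: "F t < c" if tt: "0 \<le> t" "t < \<tau>" for t
  proof (rule ccontr)
    assume "\<not> F t < c"
    then obtain z where "0 \<le> z" "z \<le> t" "F z = c"
      using IVT'[of F 0 c t] F0 c tt Fc[of t] by auto
    then have "z \<in> Z" by (auto simp: Zeq)
    then have "\<tau> \<le> z" by (rule tmin)
    then show False using \<open>z \<le> t\<close> tt by auto
  qed
  have "bounded (yh ` {0..\<tau>})"
    by (intro compact_imp_bounded compact_continuous_image yhc) auto
  then obtain M where M: "M > 0" "\<And>r. r \<in> {0..\<tau>} \<Longrightarrow> \<bar>yh r\<bar> \<le> M"
    unfolding bounded_pos by auto
  have Mle: "yh r \<le> M" if "r \<in> {0..\<tau>}" for r using M(2)[OF that] by linarith
  have lip: "c - F t \<le> M * (\<tau> - t)" if "0 \<le> t" "t \<le> \<tau>" for t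
  proof -
    have int: "yh integrable_on {0..\<tau>}" by (rule integrable_continuous_interval[OF yhc])
    have "integral {0..t} yh + integral {t..\<tau>} yh = integral {0..\<tau>} yh"
      by (rule Henstock_Kurzweil_Integration.integral_combine[OF that int])
    then have "c - F t = integral {t..\<tau>} yh" using IF[of t] IF[of \<tau>] Ft that by auto
    also have "\<dots> \<le> integral {t..\<tau>} (\<lambda>_. M)"
      by (rule integral_le)
        (use that Mle in \<open>auto intro!: integrable_continuous_interval continuous_on_subset[OF yhc[of \<tau>]]\<close>)
    also have "\<dots> = M * (\<tau> - t)" using that by simp
    finally show ?thesis .
  qed
  define k where "k = (3 * M) powr (- 4 / 3)"
  have kpos: "k > 0" using M by (simp add: k_def)
  define G where "G s = 3 * k * (\<tau> - s) powr (- 1 / 3)" for s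
  define h where "h s = ((3 * c - 3 * integral {0..s} yh) powr (- 1 / 3)) ^ 4" for s
  have lowint: "((\<lambda>s. k * (\<tau> - s) powr (- 4 / 3)) has_integral (G t - G 0)) {0..t}"
    if "0 \<le> t" "t < \<tau>" for t
  proof (rule fundamental_theorem_of_calculus[OF that(1)])
    fix s assume s: "s \<in> {0..t}"
    then have sp: "\<tau> - s > 0" using that by auto
    have "((\<lambda>s. (\<tau> - s) powr (- 1 / 3)) has_real_derivative ((- 1 / 3) * (\<tau> - s) powr (- 1 / 3 - 1)) * (- 1)) (at s)"
      by (rule DERIV_chain2[where g="\<lambda>s. \<tau> - s" and x=s, OF has_real_derivative_powr[OF sp, of "- 1 / 3"]]) (auto intro!: derivative_eq_intros)
    then have "(G has_real_derivative 3 * k * (((- 1 / 3) * (\<tau> - s) powr (- 1 / 3 - 1)) * (- 1))) (at s)"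
      unfolding G_def by (intro DERIV_cmult)
    then have "(G has_real_derivative k * (\<tau> - s) powr (- 4 / 3)) (at s)"
      by (rule DERIV_cong) simp
    then show "(G has_vector_derivative k * (\<tau> - s) powr (- 4 / 3)) (at s within {0..t})"
      by (simp add: has_real_derivative_iff_has_vector_derivative has_vector_derivative_at_within)
  qed
  have hge: "k * (\<tau> - s) powr (- 4 / 3) \<le> h s" if "0 \<le> s" "s < \<tau>" for s
  proof -
    define q where "q = 3 * c - 3 * integral {0..s} yh"
    have q: "q = 3 * (c - F s)" using IF[of s] that by (simp add: q_def)
    have qpos: "q > 0" using below[OF that] q by simp
    have qle: "q \<le> (3 * M) * (\<tau> - s)" using lip[of s] that q by simp
    have "h s = q powr (- 4 / 3)" unfolding h_def q_def[symmetric] using qpos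
      by (simp add: powr_power)
    also have "\<dots> \<ge> ((3 * M) * (\<tau> - s)) powr (- 4 / 3)"
      by (rule powr_mono2'[OF _ qpos qle]) simp
    also have "((3 * M) * (\<tau> - s)) powr (- 4 / 3) = k * (\<tau> - s) powr (- 4 / 3)"
      unfolding k_def using M that by (simp add: powr_mult)
    finally show ?thesis .
  qed
  have hint: "h integrable_on {0..t}" if "0 \<le> t" "t < \<tau>" for t
  proof -
    have "continuous_on {0..t} (\<lambda>s. 3 * c - 3 * F s)" by (intro continuous_intros Fc)
    moreover have "\<forall>s\<in>{0..t}. 3 * c - 3 * F s \<noteq> 0" using below that by fastforce
    ultimately have "continuous_on {0..t} (\<lambda>s. ((3 * c - 3 * F s) powr (- 1 / 3)) ^ 4)"
      by (intro continuous_intros continuous_on_powr Fc) auto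
    then have "continuous_on {0..t} h"
      by (rule continuous_on_eq) (auto simp: h_def IF)
    then show ?thesis by (rule integrable_continuous_interval)
  qed
  have Tlow: "G t - G 0 \<le> integral {0..t} h" if "0 \<le> t" "t < \<tau>" for t
    using has_integral_le[OF lowint[OF that] integrable_integral[OF hint[OF that]]] hge that by auto
  show ?thesis unfolding Z_def[symmetric] InfZ h_def[symmetric]
  proof (subst tendsto_PInfty, intro allI)
    fix r :: real
    define A where "A = max 1 (r / (3 * k) + \<tau> powr (- 1 / 3))"
    have A1: "A \<ge> 1" by (simp add: A_def)
    define \<delta> where "\<delta> = min \<tau> (A powr (- 3))"
    have dpos: "\<delta> > 0" using tpos A1 by (simp add: \<delta>_def)
    have "eventually (\<lambda>t. t \<in> {\<tau> - \<delta><..<\<tau>}) (at_left \<tau>)"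
      by (rule eventually_at_left_real) (use dpos in simp)
    then show "eventually (\<lambda>t. ereal r < (if t < \<tau> then ereal (integral {0..t} h) else \<infinity>)) (at_left \<tau>)"
    proof (rule eventually_mono)
      fix t assume t: "t \<in> {\<tau> - \<delta><..<\<tau>}"
      then have t0: "0 \<le> t" "t < \<tau>" by (auto simp: \<delta>_def)
      have "\<tau> - t < A powr (- 3)" using t by (auto simp: \<delta>_def)
      then have "(A powr (- 3)) powr (- 1 / 3) < (\<tau> - t) powr (- 1 / 3)"
        by (rule powr_less_mono2_neg[rotated 2]) (use t0 in auto)
      also have "(A powr (- 3)) powr (- 1 / 3) = A" using A1 by (simp add: powr_powr)
      finally have "A < (\<tau> - t) powr (- 1 / 3)" .
      then have "r / (3 * k) + \<tau> powr (- 1 / 3) < (\<tau> - t) powr (- 1 / 3)" by (simp add: A_def)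
      then have "r < 3 * k * ((\<tau> - t) powr (- 1 / 3) - \<tau> powr (- 1 / 3))"
        using kpos by (simp add: field_simps)
      also have "\<dots> = G t - G 0" by (simp add: G_def algebra_simps)
      also have "\<dots> \<le> integral {0..t} h" by (rule Tlow[OF t0])
      finally show "ereal r < (if t < \<tau> then ereal (integral {0..t} h) else \<infinity>)" using t0 by simp
    qed
  qed
qed

lemma meas_path:
  fixes Q :: "'a measure" and B :: "real \<Rightarrow> 'a \<Rightarrow> real"
  assumes Gd[measurable]: "Gd \<in> sets Q" and Bm: "\<And>r. r \<ge> 0 \<Longrightarrow> B r \<in> borel_measurable Q"
    and cont: "\<And>\<omega>. \<omega> \<in> Gd \<Longrightarrow> continuous_on {0..} (\<lambda>s. B s \<omega>)"
  shows "(\<lambda>p. if fst p \<in> Gd \<and> 0 \<le> snd p then B (snd p) (fst p) else 0) \<in> borel_measurable (Q \<Otimes>\<^sub>M (lborel :: real measure))"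
proof -
  define f where "f n p = (if fst p \<in> Gd \<and> 0 \<le> snd p then B (max 0 (real_of_int \<lceil>real (Suc n) * snd p\<rceil> / real (Suc n))) (fst p) else 0)"
    for n :: nat and p :: "'a \<times> real"
  show ?thesis
  proof (rule borel_measurable_LIMSEQ_real[where u=f])
    fix p :: "'a \<times> real"
    show "(\<lambda>n. f n p) \<longlonglongrightarrow> (if fst p \<in> Gd \<and> 0 \<le> snd p then B (snd p) (fst p) else 0)"
    proof (cases "fst p \<in> Gd \<and> 0 \<le> snd p")
      case True
      define s where "s = snd p"
      have s0: "0 \<le> s" using True by (simp add: s_def)
      define q where "q n = real_of_int \<lceil>real (Suc n) * s\<rceil> / real (Suc n)" for n :: nat
      have qge: "s \<le> q n" for n
      proof -
        have "real (Suc n) * s \<le> real_of_int \<lceil>real (Suc n) * s\<rceil>" by (rule le_of_int_ceiling)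
        then show ?thesis unfolding q_def by (simp add: field_simps)
      qed
      have qle: "q n \<le> s + 1 / real (Suc n)" for n
      proof -
        have "real_of_int \<lceil>real (Suc n) * s\<rceil> \<le> real (Suc n) * s + 1" by linarith
        then have "q n \<le> (real (Suc n) * s + 1) / real (Suc n)" unfolding q_def
          by (rule divide_right_mono) simp
        also have "\<dots> = s + 1 / real (Suc n)" by (simp add: divide_simps)
        finally show ?thesis .
      qed
      have "(\<lambda>n. s + 1 / real (Suc n)) \<longlonglongrightarrow> s + 0"
        by (intro tendsto_intros LIMSEQ_Suc[OF lim_inverse_n'])
      then have lim2: "(\<lambda>n. s + 1 / real (Suc n)) \<longlonglongrightarrow> s" by simp
      have "q \<longlonglongrightarrow> s"
      proof (rule tendsto_sandwich[where f="\<lambda>_. s" and h="\<lambda>n. s + 1 / real (Suc n)"])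
        show "eventually (\<lambda>n. s \<le> q n) sequentially" by (rule always_eventually) (simp add: qge)
        show "eventually (\<lambda>n. q n \<le> s + 1 / real (Suc n)) sequentially" by (rule always_eventually) (use qle in blast)
      qed (use lim2 in auto)
      moreover have "max 0 (q n) = q n" for n using qge[of n] s0 by simp
      moreover have "(\<lambda>n. B (q n) (fst p)) \<longlonglongrightarrow> B s (fst p)"
      proof (rule continuous_on_tendsto_compose[OF cont[of "fst p"], of q s sequentially])
        show "fst p \<in> Gd" using True by simp
        show "q \<longlonglongrightarrow> s" by fact
        show "s \<in> {0..}" using s0 by simp
        show "eventually (\<lambda>n. q n \<in> {0..}) sequentially"
          by (rule always_eventually) (use qge s0 in \<open>auto intro: order_trans\<close>)
      qed
      ultimately have "(\<lambda>n. B (max 0 (q n)) (fst p)) \<longlonglongrightarrow> B s (fst p)" by simp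
      then show ?thesis using True unfolding f_def q_def s_def by simp
    next
      case False
      then have "(\<lambda>n. f n p) = (\<lambda>_. 0)" by (auto simp: f_def fun_eq_iff)
      then show ?thesis using False by (simp del: de_Morgan_conj)
    qed
  next
    fix n :: nat
    have "{p \<in> space (Q \<Otimes>\<^sub>M (lborel :: real measure)). fst p \<in> Gd \<and> 0 \<le> snd p} = Gd \<times> {0..}"
      using sets.sets_into_space[OF Gd] by (auto simp: space_pair_measure)
    also have "\<dots> \<in> sets (Q \<Otimes>\<^sub>M (lborel :: real measure))" by (rule pair_measureI) (simp_all add: Gd atLeast_borel)
    finally have [measurable]: "Measurable.pred (Q \<Otimes>\<^sub>M (lborel :: real measure)) (\<lambda>p. fst p \<in> Gd \<and> 0 \<le> snd p)"
      unfolding pred_def .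
    have m1: "(\<lambda>p. if fst p \<in> Gd \<and> 0 \<le> snd p then B (max 0 (real_of_int i / real (Suc n))) (fst p) else 0) \<in> borel_measurable (Q \<Otimes>\<^sub>M (lborel :: real measure))" for i :: int
    proof -
      have [measurable]: "B (max 0 (real_of_int i / real (Suc n))) \<in> borel_measurable Q" by (rule Bm) simp
      show ?thesis by measurable
    qed
    have m2: "(\<lambda>p. \<lceil>real (Suc n) * snd p\<rceil>) \<in> measurable (Q \<Otimes>\<^sub>M (lborel :: real measure)) (count_space UNIV)"
      by measurable
    have "(\<lambda>p. (\<lambda>i p. if fst p \<in> Gd \<and> 0 \<le> snd p then B (max 0 (real_of_int i / real (Suc n))) (fst p) else 0)
            (\<lceil>real (Suc n) * snd p\<rceil>) p) \<in> borel_measurable (Q \<Otimes>\<^sub>M (lborel :: real measure))"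
      by (rule measurable_compose_countable'[where I=UNIV]) (use m1 m2 in auto)
    then show "f n \<in> borel_measurable (Q \<Otimes>\<^sub>M (lborel :: real measure))" unfolding f_def[abs_def] by simp
  qed
qed

lemma exp_int:
  fixes a t :: real
  assumes a: "a > 0" and t: "t \<ge> 0"
  shows "((\<lambda>s. exp (- a * (t - s))) has_integral (1 - exp (- a * t)) / a) {0..t}"
proof -
  have "((\<lambda>s. exp (- a * (t - s))) has_integral (exp (- a * (t - t)) / a - exp (- a * (t - 0)) / a)) {0..t}"
  proof (rule fundamental_theorem_of_calculus[OF t])
    fix s assume "s \<in> {0..t}"
    have "((\<lambda>s. exp (- a * (t - s)) / a) has_real_derivative (exp (- a * (t - s)) * a / a)) (at s within {0..t})"
      by (auto intro!: derivative_eq_intros)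
    then show "((\<lambda>s. exp (- a * (t - s)) / a) has_vector_derivative exp (- a * (t - s))) (at s within {0..t})"
      using a by (simp add: has_real_derivative_iff_has_vector_derivative)
  qed
  then show ?thesis by (simp add: diff_divide_distrib)
qed

lemma sqrt_exp_bound:
  fixes g u :: real
  assumes g: "g > 0" and u: "u \<ge> 0"
  shows "sqrt u * exp (- g * u) \<le> (1 + 2 / g) * exp (- (g / 2) * u)"
proof -
  have s1: "sqrt u \<le> 1 + u"
  proof (cases "u \<le> 1")
    case True
    have "sqrt u \<le> 1" using real_sqrt_le_mono[OF True] by simp
    then show ?thesis using u by linarith
  next
    case False
    then have "sqrt u \<le> u" using real_sqrt_le_iff[of u "u^2"] by (simp add: power2_eq_square)
    then show ?thesis by simp
  qed
  have e: "1 + (g / 2) * u \<le> exp ((g / 2) * u)" by (rule exp_ge_add_one_self)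
  have "1 + u \<le> (1 + 2 / g) * exp ((g / 2) * u)"
  proof -
    have "u \<le> (2 / g) * exp ((g / 2) * u)"
    proof -
      have "(2 / g) * (1 + (g / 2) * u) \<le> (2 / g) * exp ((g / 2) * u)"
        using e g by (intro mult_left_mono) auto
      moreover have "(2 / g) * (1 + (g / 2) * u) = 2 / g + u" using g by (simp add: field_simps)
      ultimately show ?thesis using g by (smt (verit) divide_pos_pos)
    qed
    moreover have "1 \<le> exp ((g / 2) * u)" using g u by simp
    moreover have "(1 + 2 / g) * exp ((g / 2) * u) = exp ((g / 2) * u) + (2 / g) * exp ((g / 2) * u)"
      by (simp add: algebra_simps)
    ultimately show ?thesis by linarith
  qed
  then have "sqrt u * exp (- g * u) \<le> (1 + 2 / g) * exp ((g / 2) * u) * exp (- g * u)"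
    using s1 by (intro mult_right_mono) auto
  also have "\<dots> = (1 + 2 / g) * (exp ((g / 2) * u) * exp (- g * u))" by (simp only: mult.assoc)
  also have "exp ((g / 2) * u) * exp (- g * u) = exp (- (g / 2) * u)"
  proof -
    have "(g / 2) * u + (- g * u) = - (g / 2) * u" by simp
    then show ?thesis by (simp only: mult_exp_exp)
  qed
  finally show ?thesis .
qed

lemma normal_abs_nn:
  assumes s: "\<sigma> > 0"
  shows "(\<integral>\<^sup>+x. ennreal (normal_density 0 \<sigma> x) * ennreal \<bar>x\<bar> \<partial>lborel) = ennreal (\<sigma> * sqrt (2 / pi))"
proof -
  have hb: "has_bochner_integral lborel (\<lambda>x. normal_density 0 \<sigma> x * \<bar>x\<bar>) (\<sigma> * sqrt (2 / pi))"
    by (rule has_bochner_integral_cong[THEN iffD1, OF refl _ _ normal_moment_abs_odd[where \<mu>=0 and \<sigma>=\<sigma> and k=0]]) (use s in auto)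
  have "(\<integral>\<^sup>+x. ennreal (normal_density 0 \<sigma> x) * ennreal \<bar>x\<bar> \<partial>lborel) = (\<integral>\<^sup>+x. ennreal (normal_density 0 \<sigma> x * \<bar>x\<bar>) \<partial>lborel)"
    by (simp add: ennreal_mult)
  also have "\<dots> = ennreal (integral\<^sup>L lborel (\<lambda>x. normal_density 0 \<sigma> x * \<bar>x\<bar>))"
    by (rule nn_integral_eq_integral) (use integrable.intros[OF hb] in auto)
  also have "\<dots> = ennreal (\<sigma> * sqrt (2 / pi))" using hb by (simp add: has_bochner_integral_integral_eq)
  finally show ?thesis .
qed

lemma normal_interval:
  assumes s: "\<sigma> > 0"
  shows "ennreal (exp (- 2) / sqrt (2 * pi)) \<le> (\<integral>\<^sup>+x. ennreal (normal_density 0 \<sigma> x) * indicator {\<sigma><..2 * \<sigma>} x \<partial>lborel)"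
proof -
  have le: "exp (- 2) / (sqrt (2 * pi) * \<sigma>) \<le> normal_density 0 \<sigma> x" if "x \<in> {\<sigma><..2 * \<sigma>}" for x
  proof -
    have "x\<^sup>2 \<le> (2 * \<sigma>)\<^sup>2" using that s by (intro power_mono) auto
    then have "- 2 \<le> - x\<^sup>2 / (2 * \<sigma>\<^sup>2)" using s by (simp add: field_simps power2_eq_square)
    then have "exp (- 2) \<le> exp (- x\<^sup>2 / (2 * \<sigma>\<^sup>2))" by simp
    moreover have "sqrt (2 * pi * \<sigma>\<^sup>2) = sqrt (2 * pi) * \<sigma>" using s by (simp add: real_sqrt_mult)
    ultimately have "normal_density 0 \<sigma> x = exp (- x\<^sup>2 / (2 * \<sigma>\<^sup>2)) / (sqrt (2 * pi) * \<sigma>)"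
      and "exp (- 2) \<le> exp (- x\<^sup>2 / (2 * \<sigma>\<^sup>2))"
      unfolding normal_density_def by auto
    then show ?thesis using s by (simp add: divide_right_mono)
  qed
  have "(\<integral>\<^sup>+x. ennreal (exp (- 2) / sqrt (2 * pi) / \<sigma>) * indicator {\<sigma><..2 * \<sigma>} x \<partial>lborel)
      \<le> (\<integral>\<^sup>+x. ennreal (normal_density 0 \<sigma> x) * indicator {\<sigma><..2 * \<sigma>} x \<partial>lborel)"
    by (intro nn_integral_mono) (auto simp: indicator_def le ennreal_leI)
  moreover have "(\<integral>\<^sup>+x. ennreal (exp (- 2) / sqrt (2 * pi) / \<sigma>) * indicator {\<sigma><..2 * \<sigma>} x \<partial>lborel)
      = ennreal (exp (- 2) / sqrt (2 * pi) / \<sigma>) * ennreal \<sigma>"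
    using s by (simp add: nn_integral_cmult_indicator)
  moreover have "ennreal (exp (- 2) / sqrt (2 * pi) / \<sigma>) * ennreal \<sigma> = ennreal (exp (- 2) / sqrt (2 * pi))"
    using s by (simp add: ennreal_mult[symmetric])
  ultimately show ?thesis by simp
qed

lemma J_decomp:
  fixes b :: "real \<Rightarrow> real"
  assumes g: "\<gamma> > 0" and t: "t \<ge> 0" and cont: "continuous_on {0..t} b"
  shows "(1 - exp (- \<gamma> * t)) / \<gamma> * b t - integral {0..t} (\<lambda>s. exp (- \<gamma> * (t - s)) * \<bar>b t - b s\<bar>)
      \<le> integral {0..t} (\<lambda>s. exp (- \<gamma> * (t - s)) * b s)"
proof -
  have i1: "(\<lambda>s. exp (- \<gamma> * (t - s)) * b t) integrable_on {0..t}"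
    by (intro integrable_continuous_interval continuous_intros)
  have i2: "(\<lambda>s. exp (- \<gamma> * (t - s)) * \<bar>b t - b s\<bar>) integrable_on {0..t}"
    by (intro integrable_continuous_interval continuous_intros cont)
  have i3: "(\<lambda>s. exp (- \<gamma> * (t - s)) * b s) integrable_on {0..t}"
    by (intro integrable_continuous_interval continuous_intros cont)
  have "integral {0..t} (\<lambda>s. exp (- \<gamma> * (t - s)) * b t) = b t * ((1 - exp (- \<gamma> * t)) / \<gamma>)"
    using integral_unique[OF has_integral_mult_left[OF exp_int[OF g t], of "b t"]] by simp
  then have "(1 - exp (- \<gamma> * t)) / \<gamma> * b t - integral {0..t} (\<lambda>s. exp (- \<gamma> * (t - s)) * \<bar>b t - b s\<bar>)
     = integral {0..t} (\<lambda>s. exp (- \<gamma> * (t - s)) * b t - exp (- \<gamma> * (t - s)) * \<bar>b t - b s\<bar>)"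
    using integral_diff[OF i1 i2] by (simp add: mult.commute)
  also have "\<dots> \<le> integral {0..t} (\<lambda>s. exp (- \<gamma> * (t - s)) * b s)"
  proof (rule integral_le)
    show "(\<lambda>s. exp (- \<gamma> * (t - s)) * b t - exp (- \<gamma> * (t - s)) * \<bar>b t - b s\<bar>) integrable_on {0..t}"
      by (rule integrable_diff[OF i1 i2])
    show "(\<lambda>s. exp (- \<gamma> * (t - s)) * b s) integrable_on {0..t}" by (rule i3)
    fix s
    have "exp (- \<gamma> * (t - s)) * (b t - b s) \<le> exp (- \<gamma> * (t - s)) * \<bar>b t - b s\<bar>"
      by (intro mult_left_mono) auto
    then show "exp (- \<gamma> * (t - s)) * b t - exp (- \<gamma> * (t - s)) * \<bar>b t - b s\<bar> \<le> exp (- \<gamma> * (t - s)) * b s"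
      by (simp add: algebra_simps)
  qed
  finally show ?thesis .
qed

definition bm_p0 :: real where "bm_p0 = exp (- 2) / sqrt (2 * pi)"

lemma bm_p0_pos: "0 < bm_p0" by (simp add: bm_p0_def)

context prob_space
begin

lemma bm_facts:
  assumes "std_brownian_motion M B"
  shows bm_meas: "\<And>t. t \<ge> 0 \<Longrightarrow> B t \<in> borel_measurable M"
   and bm_dist: "\<And>s t. 0 \<le> s \<Longrightarrow> s < t \<Longrightarrow> distributed M lborel (\<lambda>\<omega>. B t \<omega> - B s \<omega>) (\<lambda>z. ennreal (normal_density 0 (sqrt (t - s)) z))"
   and bm_indep: "\<And>ts n. 0 \<le> ts 0 \<Longrightarrow> strict_mono ts \<Longrightarrow> indep_vars (\<lambda>_. borel) (\<lambda>i \<omega>. B (ts (Suc i)) \<omega> - B (ts i) \<omega>) {..<n}"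
  using assms unfolding std_brownian_motion_def by auto

lemma markov_enn:
  assumes gm: "g \<in> borel_measurable M" and a: "a > 0" and C: "C \<ge> 0"
    and int: "(\<integral>\<^sup>+\<omega>. g \<omega> \<partial>M) \<le> ennreal C"
  shows "prob {\<omega>\<in>space M. ennreal a \<le> g \<omega>} \<le> C / a"
proof -
  define S where "S = {\<omega>\<in>space M. ennreal a \<le> g \<omega>}"
  have S: "S \<in> sets M" unfolding S_def using gm by measurable
  have "ennreal a * emeasure M S = (\<integral>\<^sup>+\<omega>. ennreal a * indicator S \<omega> \<partial>M)"
    using S by (simp add: nn_integral_cmult_indicator)
  also have "\<dots> \<le> (\<integral>\<^sup>+\<omega>. g \<omega> \<partial>M)"
    by (intro nn_integral_mono) (auto simp: S_def indicator_def)
  also have "\<dots> \<le> ennreal C" by (rule int)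
  finally have "ennreal (a * prob S) \<le> ennreal C"
    using a by (simp add: emeasure_eq_measure ennreal_mult)
  then have "a * prob S \<le> C" using C by (simp add: ennreal_le_iff)
  then show ?thesis using a by (simp add: S_def field_simps)
qed

lemma bm_abs_moment:
  assumes bm: "std_brownian_motion M B" and st: "0 \<le> s" "s < t"
  shows "(\<integral>\<^sup>+\<omega>. ennreal \<bar>B t \<omega> - B s \<omega>\<bar> \<partial>M) = ennreal (sqrt (t - s) * sqrt (2 / pi))"
proof -
  have "(\<integral>\<^sup>+x. ennreal (normal_density 0 (sqrt (t - s)) x) * ennreal \<bar>x\<bar> \<partial>lborel) = (\<integral>\<^sup>+\<omega>. ennreal \<bar>B t \<omega> - B s \<omega>\<bar> \<partial>M)"
    by (rule distributed_nn_integral[OF bm_dist[OF bm st]]) simp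
  then show ?thesis using normal_abs_nn[of "sqrt (t - s)"] st by simp
qed

lemma sqrt_2_pi_le: "sqrt (2 / pi) \<le> 1"
  using pi_gt3 by simp

lemma bm_markov:
  assumes bm: "std_brownian_motion M B" and st: "0 \<le> s" "s < t" and L: "L > 0"
  shows "prob {\<omega>\<in>space M. L \<le> \<bar>B t \<omega> - B s \<omega>\<bar>} \<le> sqrt (t - s) / L"
proof -
  have [measurable]: "B t \<in> borel_measurable M" "B s \<in> borel_measurable M"
    using bm_meas[OF bm] st by auto
  have "(\<integral>\<^sup>+\<omega>. ennreal \<bar>B t \<omega> - B s \<omega>\<bar> \<partial>M) \<le> ennreal (sqrt (t - s))"
    unfolding bm_abs_moment[OF bm st] using sqrt_2_pi_le st
    by (intro ennreal_leI) (simp add: mult_left_le)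
  then have "prob {\<omega>\<in>space M. ennreal L \<le> ennreal \<bar>B t \<omega> - B s \<omega>\<bar>} \<le> sqrt (t - s) / L"
    by (intro markov_enn L) (use st in auto)
  moreover have "{\<omega>\<in>space M. ennreal L \<le> ennreal \<bar>B t \<omega> - B s \<omega>\<bar>} = {\<omega>\<in>space M. L \<le> \<bar>B t \<omega> - B s \<omega>\<bar>}"
    by (auto simp: ennreal_le_iff)
  ultimately show ?thesis by simp
qed

lemma bm_upper:
  assumes bm: "std_brownian_motion M B" and st: "0 \<le> s" "s < t" and beta: "\<beta> \<le> sqrt (t - s)"
  shows "prob {\<omega>\<in>space M. B t \<omega> - B s \<omega> \<le> \<beta>} \<le> 1 - bm_p0"
proof -
  have [measurable]: "B t \<in> borel_measurable M" "B s \<in> borel_measurable M"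
    using bm_meas[OF bm] st by auto
  define \<sigma> where "\<sigma> = sqrt (t - s)"
  have sp: "\<sigma> > 0" using st by (simp add: \<sigma>_def)
  define C where "C = {\<omega>\<in>space M. \<sigma> < B t \<omega> - B s \<omega> \<and> B t \<omega> - B s \<omega> \<le> 2 * \<sigma>}"
  define A where "A = {\<omega>\<in>space M. B t \<omega> - B s \<omega> \<le> \<beta>}"
  have C_eq: "C = (\<lambda>\<omega>. B t \<omega> - B s \<omega>) -` {\<sigma><..2 * \<sigma>} \<inter> space M" by (auto simp: C_def)
  have "emeasure M C = (\<integral>\<^sup>+x. ennreal (normal_density 0 \<sigma> x) * indicator {\<sigma><..2 * \<sigma>} x \<partial>lborel)"
    unfolding C_eq \<sigma>_def by (rule distributed_emeasure[OF bm_dist[OF bm st]]) simp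
  then have "ennreal bm_p0 \<le> emeasure M C" using normal_interval[OF sp] by (simp add: bm_p0_def)
  then have pC: "bm_p0 \<le> prob C" by (simp add: emeasure_eq_measure ennreal_le_iff)
  have disj: "A \<inter> C = {}" using beta by (auto simp: A_def C_def \<sigma>_def)
  have AC: "A \<in> events" "C \<in> events" unfolding A_def C_def by measurable
  have "prob (A \<union> C) = prob A + prob C" by (rule finite_measure_Union[OF AC disj])
  moreover have "prob (A \<union> C) \<le> 1" by (rule prob_le_1)
  ultimately show ?thesis using pC by (simp add: A_def)
qed

lemma bm_prod:
  assumes bm: "std_brownian_motion M B" and t0: "0 \<le> ts 0" and sm: "strict_mono ts" and m: "0 < m"
    and beta: "\<And>i. \<beta> i \<le> sqrt (ts (Suc i) - ts i)"
  shows "prob {\<omega>\<in>space M. \<forall>i<m. B (ts (Suc i)) \<omega> - B (ts i) \<omega> \<le> \<beta> i} \<le> (1 - bm_p0) ^ m"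
proof -
  have ind: "indep_vars (\<lambda>_. borel) (\<lambda>i \<omega>. B (ts (Suc i)) \<omega> - B (ts i) \<omega>) {..<m}"
    by (rule bm_indep[OF bm t0 sm])
  then have IS: "indep_sets (\<lambda>i. {(\<lambda>\<omega>. B (ts (Suc i)) \<omega> - B (ts i) \<omega>) -` A \<inter> space M | A. A \<in> sets borel}) {..<m}"
    unfolding indep_vars_def2 by simp
  define E where "E i = (\<lambda>\<omega>. B (ts (Suc i)) \<omega> - B (ts i) \<omega>) -` {..\<beta> i} \<inter> space M" for i
  have "prob (\<Inter>i\<in>{..<m}. E i) = (\<Prod>i\<in>{..<m}. prob (E i))"
  proof (rule indep_setsD[OF IS])
    show "\<forall>j\<in>{..<m}. E j \<in> {(\<lambda>\<omega>. B (ts (Suc j)) \<omega> - B (ts j) \<omega>) -` A \<inter> space M | A. A \<in> sets borel}"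
    proof
      fix j assume "j \<in> {..<m}"
      show "E j \<in> {(\<lambda>\<omega>. B (ts (Suc j)) \<omega> - B (ts j) \<omega>) -` A \<inter> space M | A. A \<in> sets borel}"
        unfolding E_def by (intro CollectI exI[of _ "{..\<beta> j}"]) auto
    qed
  qed (use m in auto)
  moreover have "{\<omega>\<in>space M. \<forall>i<m. B (ts (Suc i)) \<omega> - B (ts i) \<omega> \<le> \<beta> i} = (\<Inter>i\<in>{..<m}. E i)"
    using m by (auto simp: E_def)
  moreover have "prob (E i) \<le> 1 - bm_p0" for i
  proof -
    have "ts 0 \<le> ts i" using strict_mono_mono[OF sm] by (simp add: monoD)
    moreover have "ts i < ts (Suc i)" using sm by (simp add: strict_mono_def)
    ultimately have "prob {\<omega>\<in>space M. B (ts (Suc i)) \<omega> - B (ts i) \<omega> \<le> \<beta> i} \<le> 1 - bm_p0"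
      using t0 by (intro bm_upper[OF bm _ _ beta]) auto
    moreover have "E i = {\<omega>\<in>space M. B (ts (Suc i)) \<omega> - B (ts i) \<omega> \<le> \<beta> i}" by (auto simp: E_def)
    ultimately show ?thesis by simp
  qed
  then have "(\<Prod>i\<in>{..<m}. prob (E i)) \<le> (\<Prod>i\<in>{..<m}. 1 - bm_p0)"
    by (intro prod_mono) auto
  ultimately show ?thesis by simp
qed

end

context prob_space
begin

lemma RR_bound:
  assumes bm: "std_brownian_motion M B" and g: "\<gamma> > 0" and Gd: "Gd \<in> sets M"
    and GdC: "\<And>\<omega>. \<omega> \<in> Gd \<Longrightarrow> continuous_on {0..} (\<lambda>s. B s \<omega>)" and t: "t \<ge> 0"
  defines "Pth \<equiv> (\<lambda>p. if fst p \<in> Gd \<and> 0 \<le> snd p then B (snd p) (fst p) else 0)"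
  defines "RR \<equiv> (\<lambda>\<omega>. \<integral>\<^sup>+s. ennreal (indicator {0..t} s * (exp (- \<gamma> * (t - s)) * \<bar>Pth (\<omega>, t) - Pth (\<omega>, s)\<bar>)) \<partial>lborel)"
  shows "RR \<in> borel_measurable M" and "(\<integral>\<^sup>+\<omega>. RR \<omega> \<partial>M) \<le> ennreal ((1 + 2 / \<gamma>) * (2 / \<gamma>))"
    and "\<And>\<omega>. \<omega> \<in> Gd \<Longrightarrow> RR \<omega> = ennreal (integral {0..t} (\<lambda>s. exp (- \<gamma> * (t - s)) * \<bar>B t \<omega> - B s \<omega>\<bar>))"
proof -
  have Pm[measurable]: "Pth \<in> borel_measurable (M \<Otimes>\<^sub>M (lborel :: real measure))"
    unfolding Pth_def by (rule meas_path[OF Gd bm_meas[OF bm] GdC])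
  define f where "f \<omega> s = ennreal (indicator {0..t} s * (exp (- \<gamma> * (t - s)) * \<bar>Pth (\<omega>, t) - Pth (\<omega>, s)\<bar>))" for \<omega> s
  have fm: "case_prod f \<in> borel_measurable (M \<Otimes>\<^sub>M (lborel :: real measure))"
    unfolding f_def by measurable
  have RRf: "RR = (\<lambda>\<omega>. \<integral>\<^sup>+s. f \<omega> s \<partial>lborel)" by (simp add: RR_def f_def)
  show "RR \<in> borel_measurable M" unfolding RRf by (rule lborel.borel_measurable_nn_integral[OF fm])
  interpret P: pair_sigma_finite M "lborel :: real measure" ..
  have "(\<integral>\<^sup>+\<omega>. RR \<omega> \<partial>M) = (\<integral>\<^sup>+\<omega>. (\<integral>\<^sup>+s. f \<omega> s \<partial>lborel) \<partial>M)" by (simp add: RRf)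
  also have "\<dots> = (\<integral>\<^sup>+s. (\<integral>\<^sup>+\<omega>. f \<omega> s \<partial>M) \<partial>lborel)" by (rule P.Fubini'[OF fm, symmetric])
  also have "\<dots> \<le> (\<integral>\<^sup>+s. ennreal (indicator {0..t} s * ((1 + 2 / \<gamma>) * exp (- (\<gamma> / 2) * (t - s)))) \<partial>lborel)"
  proof (rule nn_integral_mono)
    fix s :: real
    show "(\<integral>\<^sup>+\<omega>. f \<omega> s \<partial>M) \<le> ennreal (indicator {0..t} s * ((1 + 2 / \<gamma>) * exp (- (\<gamma> / 2) * (t - s))))"
    proof (cases "s \<in> {0..<t}")
      case True
      have s: "0 \<le> s" "s < t" using True by auto
      have [measurable]: "B t \<in> borel_measurable M" "B s \<in> borel_measurable M" using bm_meas[OF bm] s by auto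
      have "(\<integral>\<^sup>+\<omega>. f \<omega> s \<partial>M) \<le> (\<integral>\<^sup>+\<omega>. ennreal (exp (- \<gamma> * (t - s))) * ennreal \<bar>B t \<omega> - B s \<omega>\<bar> \<partial>M)"
      proof (rule nn_integral_mono)
        fix \<omega>
        have "\<bar>Pth (\<omega>, t) - Pth (\<omega>, s)\<bar> \<le> \<bar>B t \<omega> - B s \<omega>\<bar>" using s by (auto simp: Pth_def)
        then have "exp (- \<gamma> * (t - s)) * \<bar>Pth (\<omega>, t) - Pth (\<omega>, s)\<bar> \<le> exp (- \<gamma> * (t - s)) * \<bar>B t \<omega> - B s \<omega>\<bar>"
          by (intro mult_left_mono) auto
        then show "f \<omega> s \<le> ennreal (exp (- \<gamma> * (t - s))) * ennreal \<bar>B t \<omega> - B s \<omega>\<bar>"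
          using s by (simp add: f_def ennreal_mult[symmetric] ennreal_leI)
      qed
      also have "\<dots> = ennreal (exp (- \<gamma> * (t - s))) * (\<integral>\<^sup>+\<omega>. ennreal \<bar>B t \<omega> - B s \<omega>\<bar> \<partial>M)"
        by (rule nn_integral_cmult) measurable
      also have "\<dots> = ennreal (exp (- \<gamma> * (t - s))) * ennreal (sqrt (t - s) * sqrt (2 / pi))"
        using bm_abs_moment[OF bm s] by simp
      also have "\<dots> = ennreal (exp (- \<gamma> * (t - s)) * (sqrt (t - s) * sqrt (2 / pi)))"
        by (rule ennreal_mult[symmetric]) (use s in auto)
      also have "\<dots> \<le> ennreal (indicator {0..t} s * ((1 + 2 / \<gamma>) * exp (- (\<gamma> / 2) * (t - s))))"
      proof (rule ennreal_leI)
        have "exp (- \<gamma> * (t - s)) * (sqrt (t - s) * sqrt (2 / pi)) \<le> exp (- \<gamma> * (t - s)) * sqrt (t - s)"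
          using sqrt_2_pi_le s by (intro mult_left_mono mult_right_le_one_le) auto
        also have "\<dots> \<le> (1 + 2 / \<gamma>) * exp (- (\<gamma> / 2) * (t - s))"
          using sqrt_exp_bound[OF g, of "t - s"] s by (simp add: mult.commute)
        finally show "exp (- \<gamma> * (t - s)) * (sqrt (t - s) * sqrt (2 / pi)) \<le> indicator {0..t} s * ((1 + 2 / \<gamma>) * exp (- (\<gamma> / 2) * (t - s)))"
          using s by simp
      qed
      finally show ?thesis .
    next
      case False
      then have "f \<omega> s = 0" for \<omega> by (cases "s = t") (auto simp: f_def)
      then show ?thesis by simp
    qed
  qed
  also have "\<dots> = ennreal ((1 + 2 / \<gamma>) * ((1 - exp (- (\<gamma> / 2) * t)) / (\<gamma> / 2)))"
  proof (rule nn_integral_has_integral_lebesgue)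
    have "\<gamma> / 2 > 0" using g by simp
    from has_integral_mult_right[OF exp_int[OF this t], of "1 + 2 / \<gamma>"]
    show "((\<lambda>s. (1 + 2 / \<gamma>) * exp (- (\<gamma> / 2) * (t - s))) has_integral (1 + 2 / \<gamma>) * ((1 - exp (- (\<gamma> / 2) * t)) / (\<gamma> / 2))) {0..t}" .
  qed (use g in auto)
  also have "\<dots> \<le> ennreal ((1 + 2 / \<gamma>) * (2 / \<gamma>))"
  proof (rule ennreal_leI, rule mult_left_mono)
    have "(1 - exp (- (\<gamma> / 2) * t)) / (\<gamma> / 2) \<le> 1 / (\<gamma> / 2)"
      using g by (intro divide_right_mono) auto
    then show "(1 - exp (- (\<gamma> / 2) * t)) / (\<gamma> / 2) \<le> 2 / \<gamma>" by simp
  qed (use g in auto)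
  finally show "(\<integral>\<^sup>+\<omega>. RR \<omega> \<partial>M) \<le> ennreal ((1 + 2 / \<gamma>) * (2 / \<gamma>))" .
next
  fix \<omega> assume w: "\<omega> \<in> Gd"
  have "RR \<omega> = (\<integral>\<^sup>+s. ennreal (indicator {0..t} s * (exp (- \<gamma> * (t - s)) * \<bar>B t \<omega> - B s \<omega>\<bar>)) \<partial>lborel)"
    unfolding RR_def by (intro nn_integral_cong) (use w t in \<open>auto simp: Pth_def indicator_def\<close>)
  also have "\<dots> = ennreal (integral {0..t} (\<lambda>s. exp (- \<gamma> * (t - s)) * \<bar>B t \<omega> - B s \<omega>\<bar>))"
  proof (rule nn_integral_has_integral_lebesgue)
    have "continuous_on {0..t} (\<lambda>s. B s \<omega>)" using GdC[OF w] by (rule continuous_on_subset) auto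
    then have "continuous_on {0..t} (\<lambda>s. exp (- \<gamma> * (t - s)) * \<bar>B t \<omega> - B s \<omega>\<bar>)"
      by (intro continuous_intros)
    then show "((\<lambda>s. exp (- \<gamma> * (t - s)) * \<bar>B t \<omega> - B s \<omega>\<bar>) has_integral integral {0..t} (\<lambda>s. exp (- \<gamma> * (t - s)) * \<bar>B t \<omega> - B s \<omega>\<bar>)) {0..t}"
      by (intro integrable_integral integrable_continuous_interval)
  qed auto
  finally show "RR \<omega> = ennreal (integral {0..t} (\<lambda>s. exp (- \<gamma> * (t - s)) * \<bar>B t \<omega> - B s \<omega>\<bar>))" .
qed

end

lemma bm_p0_le1: "bm_p0 \<le> 1"
proof -
  have "exp (- 2 :: real) \<le> 1" by simp
  moreover have "1 \<le> sqrt (2 * pi)" using pi_gt3 by simp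
  ultimately have "exp (- 2 :: real) \<le> sqrt (2 * pi)" by linarith
  then show ?thesis unfolding bm_p0_def by (simp add: divide_le_eq_1)
qed

context prob_space
begin

lemma core:
  assumes bm: "std_brownian_motion M B" and g: "\<gamma> > 0" and eps: "\<epsilon> > 0" and Gd: "Gd \<in> sets M"
    and GdP: "\<And>\<omega>. \<omega> \<in> Gd \<Longrightarrow> B 0 \<omega> = 0 \<and> continuous_on {0..} (\<lambda>s. B s \<omega>)"
  shows "\<exists>S\<in>sets M. {\<omega>\<in>Gd. \<forall>t\<ge>0. integral {0..t} (\<lambda>s. exp (- \<gamma> * (t - s)) * B s \<omega>) \<le> K} \<subseteq> S \<and> prob S \<le> \<epsilon>"
proof -
  have GdC: "\<And>\<omega>. \<omega> \<in> Gd \<Longrightarrow> continuous_on {0..} (\<lambda>s. B s \<omega>)" using GdP by auto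
  have Bm[measurable]: "B t \<in> borel_measurable M" if "t \<ge> 0" for t using bm_meas[OF bm that] .
  have p0: "0 < bm_p0" "bm_p0 \<le> 1" using bm_p0_pos bm_p0_le1 by auto
  obtain m0 where m0: "(1 - bm_p0) ^ m0 < \<epsilon> / 3"
    using real_arch_pow_inv[of "\<epsilon> / 3" "1 - bm_p0"] eps p0 by auto
  define m where "m = Suc m0"
  have m: "0 < m" by (simp add: m_def)
  have pm: "(1 - bm_p0) ^ m \<le> \<epsilon> / 3"
  proof -
    have "(1 - bm_p0) ^ m = (1 - bm_p0) * (1 - bm_p0) ^ m0" by (simp add: m_def)
    also have "\<dots> \<le> 1 * (1 - bm_p0) ^ m0" using p0 by (intro mult_right_mono) auto
    finally show ?thesis using m0 by simp
  qed
  define C where "C = (1 + 2 / \<gamma>) * (2 / \<gamma>)"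
  have Cpos: "C > 0" using g by (simp add: C_def add_pos_pos)
  define a where "a = 3 * real m * C / \<epsilon>"
  have apos: "a > 0" using m Cpos eps by (simp add: a_def)
  define c1 where "c1 = (1 - exp (- \<gamma>)) / \<gamma>"
  have c1pos: "c1 > 0" using g by (simp add: c1_def)
  define b where "b = \<bar>K + a\<bar> / c1"
  have b0: "b \<ge> 0" using c1pos by (simp add: b_def)
  define L where "L \<tau> = 3 * real m * sqrt \<tau> / \<epsilon>" for \<tau>
  have L0: "L 0 = 0" by (simp add: L_def)
  have Lnn: "L \<tau> \<ge> 0" if "\<tau> \<ge> 0" for \<tau> using that m eps by (simp add: L_def)
  define ts where "ts = rec_nat 0 (\<lambda>k \<tau>. \<tau> + max 1 ((b + L \<tau>)\<^sup>2))"
  have ts0: "ts 0 = 0" by (simp add: ts_def)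
  have tsS: "ts (Suc k) = ts k + max 1 ((b + L (ts k))\<^sup>2)" for k by (simp add: ts_def)
  have sm: "strict_mono ts" by (rule strict_monoI_Suc) (simp add: tsS)
  have tsnn: "ts k \<ge> 0" for k by (induction k) (auto simp: ts0 tsS intro: add_nonneg_nonneg)
  have ts1: "ts (Suc k) \<ge> 1" for k using tsnn[of k] by (simp add: tsS)
  have beta: "b + L (ts i) \<le> sqrt (ts (Suc i) - ts i)" for i
  proof -
    have "sqrt ((b + L (ts i))\<^sup>2) \<le> sqrt (ts (Suc i) - ts i)" by (simp add: tsS del: real_sqrt_abs)
    then show ?thesis by simp
  qed
  define Pth where "Pth = (\<lambda>p. if fst p \<in> Gd \<and> 0 \<le> snd p then B (snd p) (fst p) else 0)"
  define RR where "RR t \<omega> = (\<integral>\<^sup>+s. ennreal (indicator {0..t} s * (exp (- \<gamma> * (t - s)) * \<bar>Pth (\<omega>, t) - Pth (\<omega>, s)\<bar>)) \<partial>lborel)" for t \<omega>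
  have RRm[measurable]: "RR t \<in> borel_measurable M" if "t \<ge> 0" for t
    unfolding RR_def Pth_def using RR_bound(1)[OF bm g Gd GdC that] by simp
  have RRi: "(\<integral>\<^sup>+\<omega>. RR t \<omega> \<partial>M) \<le> ennreal C" if "t \<ge> 0" for t
    unfolding RR_def Pth_def C_def using RR_bound(2)[OF bm g Gd GdC that] by simp
  have RRe: "RR t \<omega> = ennreal (integral {0..t} (\<lambda>s. exp (- \<gamma> * (t - s)) * \<bar>B t \<omega> - B s \<omega>\<bar>))"
    if "t \<ge> 0" "\<omega> \<in> Gd" for t \<omega>
    unfolding RR_def Pth_def using RR_bound(3)[OF bm g Gd GdC that(1) that(2)] by simp
  define E2 where "E2 = (\<Union>k\<in>{1..m}. {\<omega>\<in>space M. ennreal a \<le> RR (ts k) \<omega>})"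
  define E3 where "E3 = (\<Union>j\<in>{1..<m}. {\<omega>\<in>space M. L (ts j) \<le> \<bar>B (ts j) \<omega> - B 0 \<omega>\<bar>})"
  define E4 where "E4 = {\<omega>\<in>space M. \<forall>i<m. B (ts (Suc i)) \<omega> - B (ts i) \<omega> \<le> b + L (ts i)}"
  have E2m: "E2 \<in> sets M" unfolding E2_def using tsnn by (intro sets.finite_UN) auto
  have E3m: "E3 \<in> sets M" unfolding E3_def using tsnn by (intro sets.finite_UN) auto
  have E4m: "E4 \<in> sets M"
  proof -
    have "E4 = space M \<inter> (\<Inter>i\<in>{..<m}. {\<omega>\<in>space M. B (ts (Suc i)) \<omega> - B (ts i) \<omega> \<le> b + L (ts i)})"
      by (auto simp: E4_def)
    also have "\<dots> \<in> sets M" using tsnn m by (intro sets.Int sets.top sets.finite_INT) auto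
    finally show ?thesis .
  qed
  have pE2: "prob E2 \<le> \<epsilon> / 3"
  proof -
    have "prob E2 \<le> (\<Sum>k\<in>{1..m}. prob {\<omega>\<in>space M. ennreal a \<le> RR (ts k) \<omega>})"
      unfolding E2_def using tsnn by (intro finite_measure_subadditive_finite) auto
    also have "\<dots> \<le> (\<Sum>k\<in>{1..m}. C / a)"
      by (intro sum_mono markov_enn RRm RRi tsnn apos) (use Cpos in auto)
    also have "\<dots> = real m * C / a" by simp
    also have "\<dots> = \<epsilon> / 3" using m Cpos eps by (simp add: a_def field_simps)
    finally show ?thesis .
  qed
  have pE3: "prob E3 \<le> \<epsilon> / 3"
  proof -
    have "prob E3 \<le> (\<Sum>j\<in>{1..<m}. prob {\<omega>\<in>space M. L (ts j) \<le> \<bar>B (ts j) \<omega> - B 0 \<omega>\<bar>})"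
      unfolding E3_def using tsnn by (intro finite_measure_subadditive_finite) auto
    also have "\<dots> \<le> (\<Sum>j\<in>{1..<m}. \<epsilon> / (3 * real m))"
    proof (rule sum_mono)
      fix j assume j: "j \<in> {1..<m}"
      then obtain k where k: "j = Suc k" by (cases j) auto
      have tj: "ts j \<ge> 1" using ts1 k by simp
      have Lp: "L (ts j) > 0" using tj m eps by (simp add: L_def)
      have "prob {\<omega>\<in>space M. L (ts j) \<le> \<bar>B (ts j) \<omega> - B 0 \<omega>\<bar>} \<le> sqrt (ts j - 0) / L (ts j)"
        by (rule bm_markov[OF bm _ _ Lp]) (use tj in auto)
      also have "\<dots> = \<epsilon> / (3 * real m)" using tj m eps by (simp add: L_def field_simps)
      finally show "prob {\<omega>\<in>space M. L (ts j) \<le> \<bar>B (ts j) \<omega> - B 0 \<omega>\<bar>} \<le> \<epsilon> / (3 * real m)" .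
    qed
    also have "\<dots> = real (m - 1) * (\<epsilon> / (3 * real m))" by simp
    also have "\<dots> \<le> real m * (\<epsilon> / (3 * real m))" using eps m by (intro mult_right_mono) auto
    also have "\<dots> = \<epsilon> / 3" using m by simp
    finally show ?thesis .
  qed
  have pE4: "prob E4 \<le> \<epsilon> / 3"
    unfolding E4_def using bm_prod[OF bm _ sm m beta] pm ts0 by simp
  define S where "S = E2 \<union> E3 \<union> E4"
  have Sm: "S \<in> sets M" unfolding S_def using E2m E3m E4m by auto
  have "prob S \<le> prob (E2 \<union> E3) + prob E4"
    unfolding S_def using E2m E3m E4m by (intro measure_subadditive) (auto simp: emeasure_eq_measure)
  also have "\<dots> \<le> prob E2 + prob E3 + prob E4"
    using measure_subadditive[OF E2m E3m] by (simp add: emeasure_eq_measure)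
  also have "\<dots> \<le> \<epsilon>" using pE2 pE3 pE4 by simp
  finally have pS: "prob S \<le> \<epsilon>" .
  have sub: "{\<omega>\<in>Gd. \<forall>t\<ge>0. integral {0..t} (\<lambda>s. exp (- \<gamma> * (t - s)) * B s \<omega>) \<le> K} \<subseteq> S"
  proof
    fix \<omega> assume w: "\<omega> \<in> {\<omega>\<in>Gd. \<forall>t\<ge>0. integral {0..t} (\<lambda>s. exp (- \<gamma> * (t - s)) * B s \<omega>) \<le> K}"
    then have wG: "\<omega> \<in> Gd" and JK: "\<And>t. t \<ge> 0 \<Longrightarrow> integral {0..t} (\<lambda>s. exp (- \<gamma> * (t - s)) * B s \<omega>) \<le> K" by auto
    have wS: "\<omega> \<in> space M" using wG sets.sets_into_space[OF Gd] by auto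
    have B0: "B 0 \<omega> = 0" using GdP[OF wG] by simp
    show "\<omega> \<in> S"
    proof (cases "\<omega> \<in> E2 \<or> \<omega> \<in> E3")
      case True then show ?thesis by (auto simp: S_def)
    next
      case False
      then have n2: "\<And>k. k \<in> {1..m} \<Longrightarrow> \<not> ennreal a \<le> RR (ts k) \<omega>"
        and n3: "\<And>j. j \<in> {1..<m} \<Longrightarrow> \<not> L (ts j) \<le> \<bar>B (ts j) \<omega> - B 0 \<omega>\<bar>"
        using wS by (auto simp: E2_def E3_def)
      have "\<omega> \<in> E4" unfolding E4_def
      proof (intro CollectI conjI allI impI wS)
        fix i assume i: "i < m"
        define k where "k = Suc i"
        have k: "k \<in> {1..m}" using i by (simp add: k_def)
        have tk: "ts k \<ge> 1" using ts1 by (simp add: k_def)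
        define Iabs where "Iabs = integral {0..ts k} (\<lambda>s. exp (- \<gamma> * (ts k - s)) * \<bar>B (ts k) \<omega> - B s \<omega>\<bar>)"
        have "\<not> ennreal a \<le> ennreal Iabs" using n2[OF k] RRe[of "ts k" \<omega>] tk wG by (simp add: Iabs_def)
        then have Ia: "Iabs < a" using ennreal_leI[of a Iabs] by linarith
        define ck where "ck = (1 - exp (- \<gamma> * ts k)) / \<gamma>"
        have ck: "c1 \<le> ck"
        proof -
          have "exp (- \<gamma> * ts k) \<le> exp (- \<gamma>)" using tk g by simp
          then show ?thesis unfolding c1_def ck_def using g by (intro divide_right_mono) auto
        qed
        have ckpos: "ck > 0" using ck c1pos by simp
        have contk: "continuous_on {0..ts k} (\<lambda>s. B s \<omega>)" using GdC[OF wG] by (rule continuous_on_subset) auto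
        have "ck * B (ts k) \<omega> - Iabs \<le> integral {0..ts k} (\<lambda>s. exp (- \<gamma> * (ts k - s)) * B s \<omega>)"
          using J_decomp[OF g _ contk] tk unfolding ck_def Iabs_def by simp
        also have "\<dots> \<le> K" using JK tk by simp
        finally have "ck * B (ts k) \<omega> < K + a" using Ia by simp
        then have "B (ts k) \<omega> < (K + a) / ck" using ckpos by (simp add: field_simps)
        also have "\<dots> \<le> \<bar>K + a\<bar> / ck" using ckpos by (intro divide_right_mono) auto
        also have "\<dots> \<le> \<bar>K + a\<bar> / c1" using ck c1pos by (intro divide_left_mono) auto
        finally have up: "B (ts k) \<omega> < b" by (simp add: b_def)
        have low: "- L (ts i) \<le> B (ts i) \<omega>"
        proof (cases "i = 0")
          case True then show ?thesis using B0 ts0 L0 by simp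
        next
          case False
          then have "i \<in> {1..<m}" using i by simp
          from n3[OF this] show ?thesis using B0 by simp
        qed
        show "B (ts (Suc i)) \<omega> - B (ts i) \<omega> \<le> b + L (ts i)" using up low by (simp add: k_def)
      qed
      then show ?thesis by (simp add: S_def)
    qed
  qed
  show ?thesis using Sm sub pS by blast
qed

lemma core_AE:
  assumes bm: "std_brownian_motion M B" and g: "\<gamma> > 0" and Gd: "Gd \<in> sets M"
    and GdP: "\<And>\<omega>. \<omega> \<in> Gd \<Longrightarrow> B 0 \<omega> = 0 \<and> continuous_on {0..} (\<lambda>s. B s \<omega>)"
  shows "AE \<omega> in M. \<omega> \<in> Gd \<longrightarrow> (\<exists>t\<ge>0. K < integral {0..t} (\<lambda>s. exp (- \<gamma> * (t - s)) * B s \<omega>))"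
proof -
  define bad where "bad = {\<omega>\<in>Gd. \<forall>t\<ge>0. integral {0..t} (\<lambda>s. exp (- \<gamma> * (t - s)) * B s \<omega>) \<le> K}"
  have ex: "\<exists>S. S \<in> sets M \<and> bad \<subseteq> S \<and> prob S \<le> 1 / real (Suc n)" for n :: nat
  proof -
    have "1 / real (Suc n) > 0" by simp
    from core[OF bm g this Gd GdP, of K] obtain S where "S \<in> sets M"
      "{\<omega>\<in>Gd. \<forall>t\<ge>0. integral {0..t} (\<lambda>s. exp (- \<gamma> * (t - s)) * B s \<omega>) \<le> K} \<subseteq> S" "prob S \<le> 1 / real (Suc n)"
      by blast
    then show ?thesis unfolding bad_def by blast
  qed
  then have "\<forall>n. \<exists>S. S \<in> sets M \<and> bad \<subseteq> S \<and> prob S \<le> 1 / real (Suc n)" by blast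
  then obtain S where S: "\<forall>n. S n \<in> sets M \<and> bad \<subseteq> S n \<and> prob (S n) \<le> 1 / real (Suc n)"
    unfolding choice_iff by blast
  define N where "N = (\<Inter>n. S n)"
  have Sm: "S n \<in> sets M" for n using S by blast
  have Nm: "N \<in> sets M" unfolding N_def using Sm by auto
  have "prob N \<le> 0"
  proof (rule ccontr)
    assume "\<not> prob N \<le> 0"
    then have "0 < prob N" by simp
    then obtain n where n: "inverse (real (Suc n)) < prob N" using reals_Archimedean by blast
    have "prob N \<le> prob (S n)" unfolding N_def by (intro finite_measure_mono Sm) auto
    moreover have "prob (S n) \<le> 1 / real (Suc n)" using S by blast
    ultimately show False using n by (simp add: inverse_eq_divide)
  qed
  then have "emeasure M N = 0" using Nm by (simp add: emeasure_eq_measure measure_nonneg antisym)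
  then have "N \<in> null_sets M" using Nm by (simp add: null_sets_def)
  moreover have "{\<omega>\<in>space M. \<not> (\<omega> \<in> Gd \<longrightarrow> (\<exists>t\<ge>0. K < integral {0..t} (\<lambda>s. exp (- \<gamma> * (t - s)) * B s \<omega>)))} \<subseteq> N"
  proof
    fix \<omega> assume w: "\<omega> \<in> {\<omega>\<in>space M. \<not> (\<omega> \<in> Gd \<longrightarrow> (\<exists>t\<ge>0. K < integral {0..t} (\<lambda>s. exp (- \<gamma> * (t - s)) * B s \<omega>)))}"
    then have "\<omega> \<in> bad" unfolding bad_def by (auto simp: not_less)
    then show "\<omega> \<in> N" using S unfolding N_def by blast
  qed
  ultimately show ?thesis by (rule AE_I')
qed
end

lemma pointwise:
  fixes x y :: "'a \<Rightarrow> real" and B :: "real \<Rightarrow> 'a \<Rightarrow> real"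
  assumes g: "\<gamma> > 0" and D: "D > 0" and xp: "x \<omega> > 0" and B0: "B 0 \<omega> = 0"
    and cont: "continuous_on {0..} (\<lambda>t. B t \<omega>)"
    and big: "\<forall>K::nat. \<exists>t\<ge>0. real K < integral {0..t} (\<lambda>s. exp (- \<gamma> * (t - s)) * B s \<omega>)"
  shows "((\<lambda>t. Tclock \<gamma> D x y B t \<omega>) \<longlongrightarrow> \<infinity>) (at_left (tau \<gamma> D x y B \<omega>))"
proof -
  define c where "c = x \<omega> powr (- 3) / 3"
  have c: "c > 0" using xp by (simp add: c_def)
  define yh where "yh = (\<lambda>r. yhat \<gamma> D y B r \<omega>)"
  have yh: "yh = (\<lambda>r. exp (- \<gamma> * r) * y \<omega> + sqrt (2 * D) * (B r \<omega> - B 0 \<omega> - \<gamma> * integral {0..r} (\<lambda>s. exp (- \<gamma> * (r - s)) * B s \<omega>)))"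
    by (simp add: yh_def yhat_def fun_eq_iff)
  have contT: "continuous_on {0..T} (\<lambda>t. B t \<omega>)" for T using cont by (rule continuous_on_subset) auto
  have Iyh: "integral {0..t} yh = y \<omega> * (1 - exp (- \<gamma> * t)) / \<gamma> + sqrt (2 * D) * integral {0..t} (\<lambda>s. exp (- \<gamma> * (t - s)) * B s \<omega>)"
    if "t \<ge> 0" for t
    using integral_unique[OF F_has_integral[OF g contT[of t] that, of "y \<omega>" D]] B0 unfolding yh by simp
  obtain K :: nat where K: "(c + \<bar>y \<omega>\<bar> / \<gamma>) / sqrt (2 * D) < real K" using reals_Archimedean2 by blast
  obtain t where t: "t \<ge> 0" "real K < integral {0..t} (\<lambda>s. exp (- \<gamma> * (t - s)) * B s \<omega>)" using big by blast
  have ex: "\<exists>s\<ge>0. c \<le> integral {0..s} yh"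
  proof (intro exI conjI)
    show "0 \<le> t" by fact
    have e: "0 \<le> 1 - exp (- \<gamma> * t)" "1 - exp (- \<gamma> * t) \<le> 1" using g t by auto
    have "- \<bar>y \<omega>\<bar> \<le> y \<omega> * (1 - exp (- \<gamma> * t))"
    proof -
      have "\<bar>y \<omega> * (1 - exp (- \<gamma> * t))\<bar> \<le> \<bar>y \<omega>\<bar> * 1" unfolding abs_mult using e by (intro mult_left_mono) auto
      then show ?thesis by linarith
    qed
    then have y1: "- \<bar>y \<omega>\<bar> / \<gamma> \<le> y \<omega> * (1 - exp (- \<gamma> * t)) / \<gamma>" using divide_right_mono[OF _ less_imp_le[OF g]] by (metis minus_divide_left)
    have sD: "sqrt (2 * D) > 0" using D by simp
    have "c + \<bar>y \<omega>\<bar> / \<gamma> < sqrt (2 * D) * real K" using K sD by (simp add: field_simps)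
    also have "\<dots> \<le> sqrt (2 * D) * integral {0..t} (\<lambda>s. exp (- \<gamma> * (t - s)) * B s \<omega>)"
      using t sD by (intro mult_left_mono) auto
    finally show "c \<le> integral {0..t} yh" using Iyh[OF t(1)] y1 by simp
  qed
  have main: "((\<lambda>t. if t < Inf {s. 0 \<le> s \<and> integral {0..s} yh = c}
             then ereal (integral {0..t} (\<lambda>s. ((3 * c - 3 * integral {0..s} yh) powr (- 1 / 3)) ^ 4))
             else \<infinity>) \<longlongrightarrow> \<infinity>) (at_left (Inf {s. 0 \<le> s \<and> integral {0..s} yh = c}))"
    by (rule det_main[OF g cont B0 c yh ex])
  have "tau \<gamma> D x y B \<omega> = Inf {s. 0 \<le> s \<and> integral {0..s} yh = c}"
    by (simp add: tau_def yh_def c_def)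
  moreover have "(\<lambda>t. Tclock \<gamma> D x y B t \<omega>) = (\<lambda>t. if t < Inf {s. 0 \<le> s \<and> integral {0..s} yh = c}
             then ereal (integral {0..t} (\<lambda>s. ((3 * c - 3 * integral {0..s} yh) powr (- 1 / 3)) ^ 4))
             else \<infinity>)"
    by (simp add: fun_eq_iff Tclock_def tau_def xhat_def yh_def c_def)
  ultimately show ?thesis using main by simp
qed

theorem lemma2:
  fixes Q :: "'a measure" and x y :: "'a \<Rightarrow> real" and B :: "real \<Rightarrow> 'a \<Rightarrow> real"
    and \<gamma> D :: real
  assumes "\<gamma> > 0" and "D > 0"
    and "prob_space Q"
    and "x \<in> borel_measurable Q" and "y \<in> borel_measurable Q"
    and "AE \<omega> in Q. x \<omega> > 0"
    and "std_brownian_motion Q B"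
    and "prob_space.indep_set Q (pair_events Q x y) (process_events Q B)"
  shows "AE \<omega> in Q. ((\<lambda>t. Tclock \<gamma> D x y B t \<omega>) \<longlongrightarrow> \<infinity>) (at_left (tau \<gamma> D x y B \<omega>))"
proof -
  note g = assms(1) and D = assms(2) and bm = assms(7)
  interpret prob_space Q by (rule assms(3))
  have "AE \<omega> in Q. B 0 \<omega> = 0 \<and> continuous_on {0..} (\<lambda>t. B t \<omega>)"
    using bm unfolding std_brownian_motion_def by blast
  then obtain N0 where N0: "{\<omega>\<in>space Q. \<not> (B 0 \<omega> = 0 \<and> continuous_on {0..} (\<lambda>t. B t \<omega>))} \<subseteq> N0"
    "emeasure Q N0 = 0" "N0 \<in> sets Q" by (rule AE_E)
  define Gd where "Gd = space Q - N0"
  have Gd: "Gd \<in> sets Q" unfolding Gd_def using N0(3) by auto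
  have GdP: "B 0 \<omega> = 0 \<and> continuous_on {0..} (\<lambda>t. B t \<omega>)" if "\<omega> \<in> Gd" for \<omega>
    using that N0(1) unfolding Gd_def by blast
  have aeG: "AE \<omega> in Q. \<omega> \<in> Gd"
    by (rule AE_I'[of N0]) (use N0 in \<open>auto simp: Gd_def null_sets_def\<close>)
  have aeK: "AE \<omega> in Q. \<forall>K::nat. \<omega> \<in> Gd \<longrightarrow> (\<exists>t\<ge>0. real K < integral {0..t} (\<lambda>s. exp (- \<gamma> * (t - s)) * B s \<omega>))"
    unfolding AE_all_countable using core_AE[OF bm g Gd GdP] by blast
  have "AE \<omega> in Q. x \<omega> > 0 \<and> \<omega> \<in> Gd \<and> (\<forall>K::nat. \<omega> \<in> Gd \<longrightarrow> (\<exists>t\<ge>0. real K < integral {0..t} (\<lambda>s. exp (- \<gamma> * (t - s)) * B s \<omega>)))"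
    using assms(6) aeG aeK by (intro AE_conjI)
  then show ?thesis
  proof (rule eventually_mono)
    fix \<omega> assume w: "x \<omega> > 0 \<and> \<omega> \<in> Gd \<and> (\<forall>K::nat. \<omega> \<in> Gd \<longrightarrow> (\<exists>t\<ge>0. real K < integral {0..t} (\<lambda>s. exp (- \<gamma> * (t - s)) * B s \<omega>)))"
    then have "B 0 \<omega> = 0" "continuous_on {0..} (\<lambda>t. B t \<omega>)" using GdP by auto
    then show "((\<lambda>t. Tclock \<gamma> D x y B t \<omega>) \<longlongrightarrow> \<infinity>) (at_left (tau \<gamma> D x y B \<omega>))"
      using pointwise[OF g D _ _ _, of x \<omega> B y] w by blast
  qed
qed

end
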